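(* Let $U=\{\rho\in L^2(S^1):\int_0^1\rho^2dx=1\}$ be the unit sphere and $TU=\{(\rho,\sigma)\in L^2(S^1)\times L^2(S^1):\rho\in U,\ \int_0^1\rho\sigma\,dx=0\}$. Then the second-order vector field $(\rho,\sigma)\mapsto(\sigma,f(\rho,\sigma))$ restricts to the tangent bundle $TU$; that is, for every $(\rho,\sigma)\in TU$, $$\int_0^1\sigma^2\,dx+\int_0^1\rho\, f(\rho,\sigma)\,dx=0.$$
   Context: $S^1=\mathbb{R}/\mathbb{Z}$; functions on $S^1$ are $1$-periodic functions on $[0,1]$. Fix a constant $\mu\in\mathbb{R}$ (in the application $\mu=\int_0^1u_0\,dx$). For $\rho,\sigma\in L^2(S^1)$ define $$G(\rho,\sigma)(x)=\int_0^x 2\rho\sigma\,dy+\mu-\int_0^1\Big(\int_0^y 2\rho\sigma\,dz\Big)\rho(y)^2\,dy,$$ $$F(\rho,\sigma)(x)=\int_0^1\frac{\cosh\big(\big|\int_y^x\rho(z)^2dz\big|-\tfrac12\big)}{2\sinh(1/2)}\big(\rho(y)^2G(y)^2+2\sigma(y)^2\big)\,dy,\qquad f(\rho,\sigma)=\tfrac12\rho\,(G^2-F),$$ with $G=G(\rho,\sigma)$. *)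

theory Defs
  imports "HOL-Analysis.Analysis"
begin

text \<open>Functions on S^1 = R/Z are represented by real functions, of which only the
values on [0,1] matter. All integrals are (oriented) Lebesgue interval integrals.\<close>

definition G :: "real \<Rightarrow> (real \<Rightarrow> real) \<Rightarrow> (real \<Rightarrow> real) \<Rightarrow> real \<Rightarrow> real" where
  "G \<mu> \<rho> \<sigma> x =
     (LBINT y=0..x. 2 * \<rho> y * \<sigma> y) + \<mu>
     - (LBINT y=0..1. (LBINT z=0..y. 2 * \<rho> z * \<sigma> z) * (\<rho> y)\<^sup>2)"

definition F :: "real \<Rightarrow> (real \<Rightarrow> real) \<Rightarrow> (real \<Rightarrow> real) \<Rightarrow> real \<Rightarrow> real" where
  "F \<mu> \<rho> \<sigma> x =
     (LBINT y=0..1. cosh (\<bar>LBINT z=y..x. (\<rho> z)\<^sup>2\<bar> - 1/2) / (2 * sinh (1/2))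
        * ((\<rho> y)\<^sup>2 * (G \<mu> \<rho> \<sigma> y)\<^sup>2 + 2 * (\<sigma> y)\<^sup>2))"

definition f :: "real \<Rightarrow> (real \<Rightarrow> real) \<Rightarrow> (real \<Rightarrow> real) \<Rightarrow> real \<Rightarrow> real" where
  "f \<mu> \<rho> \<sigma> x = 1/2 * \<rho> x * ((G \<mu> \<rho> \<sigma> x)\<^sup>2 - F \<mu> \<rho> \<sigma> x)"

end

theory Submission
  imports Defs "HOL-Probability.Probability"
begin

lemma cosh_int:
  fixes a :: real assumes a: "0 \<le> a" "a \<le> 1"
  shows "(LBINT u=0..1. cosh (\<bar>u - a\<bar> - 1/2)) = 2 * sinh (1/2)"
proof -
  let ?f = "\<lambda>u::real. cosh (\<bar>u - a\<bar> - 1/2)"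
  have c: "continuous_on S ?f" for S by (intro continuous_intros)
  have i1: "(LBINT u=ereal 0..ereal a. ?f u) = - sinh (a - a - 1/2) - (- sinh (a - 0 - 1/2))"
  proof (rule interval_integral_FTC_finite[OF c])
    fix x assume "min 0 a \<le> x" "x \<le> max 0 a"
    then have x: "x \<le> a" using a by auto
    have "((\<lambda>u. - sinh (a - u - 1/2)) has_real_derivative (- (cosh (a - x - 1/2) * (- 1)))) (at x within {min 0 a..max 0 a})"
      by (auto intro!: derivative_eq_intros)
    moreover have "- (cosh (a - x - 1/2) * (- 1)) = ?f x" using x by (simp add: abs_if)
    ultimately show "((\<lambda>u. - sinh (a - u - 1/2)) has_vector_derivative ?f x) (at x within {min 0 a..max 0 a})"
      by (simp add: has_real_derivative_iff_has_vector_derivative)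
  qed
  have i2: "(LBINT u=ereal a..ereal 1. ?f u) = sinh (1 - a - 1/2) - sinh (a - a - 1/2)"
  proof (rule interval_integral_FTC_finite[OF c])
    fix x assume "min a 1 \<le> x" "x \<le> max a 1"
    then have x: "a \<le> x" using a by auto
    have "((\<lambda>u. sinh (u - a - 1/2)) has_real_derivative (cosh (x - a - 1/2) * 1)) (at x within {min a 1..max a 1})"
      by (auto intro!: derivative_eq_intros)
    moreover have "cosh (x - a - 1/2) * 1 = ?f x" using x by (simp add: abs_if)
    ultimately show "((\<lambda>u. sinh (u - a - 1/2)) has_vector_derivative ?f x) (at x within {min a 1..max a 1})"
      by (simp add: has_real_derivative_iff_has_vector_derivative)
  qed
  have "(LBINT u=ereal 0..ereal a. ?f u) + (LBINT u=ereal a..ereal 1. ?f u) = (LBINT u=ereal 0..ereal 1. ?f u)"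
  proof (rule interval_integral_sum)
    have "interval_lebesgue_integrable lborel (ereal 0) (ereal 1) ?f"
      by (intro interval_integrable_isCont continuous_intros)
    then show "interval_lebesgue_integrable lborel (min (ereal 0) (min (ereal a) (ereal 1)))
      (max (ereal 0) (max (ereal a) (ereal 1))) ?f" using a by (simp add: min_def max_def)
  qed
  moreover have "sinh (1 - a - 1/2) = - sinh (a - 1/2)"
    using sinh_minus[of "a - 1/2"] by (simp add: algebra_simps)
  ultimately show ?thesis using i1 i2 by (simp add: sinh_minus zero_ereal_def one_ereal_def)
qed

lemma push:
  fixes w g :: "real \<Rightarrow> real"
  assumes wm[measurable]: "w \<in> borel_measurable borel" and w0: "\<And>x. 0 \<le> w x"
    and wout: "\<And>x. x \<notin> {0..1} \<Longrightarrow> w x = 0"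
    and wi: "integrable lborel w" and w1: "integral\<^sup>L lborel w = 1"
    and g: "continuous_on UNIV g"
  defines "M \<equiv> density lborel (\<lambda>x. ennreal (w x))"
  shows "(\<integral>x. w x * g (cdf M x) \<partial>lborel) = (\<integral>u. indicator {0..1} u * g u \<partial>lborel)"
proof -
  have spM[simp]: "space M = UNIV" and setsM[simp]: "sets M = sets borel" unfolding M_def by auto
  have emA: "emeasure M A = ennreal (\<integral>x. w x * indicator A x \<partial>lborel)" if A[measurable]: "A \<in> sets borel" for A
  proof -
    have "emeasure M A = (\<integral>\<^sup>+ x. ennreal (w x) * indicator A x \<partial>lborel)"
      unfolding M_def by (rule emeasure_density) auto
    also have "\<dots> = (\<integral>\<^sup>+ x. ennreal (w x * indicator A x) \<partial>lborel)"
      by (intro nn_integral_cong) (auto split: split_indicator)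
    also have "\<dots> = ennreal (\<integral>x. w x * indicator A x \<partial>lborel)"
      by (intro nn_integral_eq_integral integrable_real_mult_indicator wi) (auto simp: w0)
    finally show ?thesis .
  qed
  have mA: "measure M A = (\<integral>x. w x * indicator A x \<partial>lborel)" if A[measurable]: "A \<in> sets borel" for A
    using emA[OF A] by (simp add: measure_def integral_nonneg_AE w0)
  have "prob_space M"
    by (rule prob_spaceI) (use emA[of UNIV] w1 in simp)
  then interpret real_distribution M
    by (intro real_distribution.intro real_distribution_axioms.intro) auto
  define R where "R = cdf M"
  have Rmono: "x \<le> y \<Longrightarrow> R x \<le> R y" for x y unfolding R_def by (rule cdf_nondecreasing)
  have Rcont: "isCont R x" for x
  proof -
    have "emeasure M {x} = (\<integral>\<^sup>+ y. ennreal (w y) * indicator {x} y \<partial>lborel)"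
      unfolding M_def by (rule emeasure_density) auto
    also have "\<dots> = 0" by (rule nn_integral_null_set) auto
    finally show ?thesis unfolding R_def isCont_cdf by (simp add: measure_def)
  qed
  have Rneg: "R x = 0" if "x < 0" for x
  proof -
    have "R x = (\<integral>y. w y * indicator {..x} y \<partial>lborel)" unfolding R_def cdf_def by (simp add: mA)
    also have "(\<lambda>y. w y * indicator {..x} y) = (\<lambda>y. 0)"
      using that wout by (auto split: split_indicator)
    finally show ?thesis by simp
  qed
  have Rbig: "R x = 1" if "1 \<le> x" for x
  proof -
    have "R x = (\<integral>y. w y * indicator {..x} y \<partial>lborel)" unfolding R_def cdf_def by (simp add: mA)
    also have "(\<lambda>y. w y * indicator {..x} y) = w"
    proof
      fix y show "w y * indicator {..x} y = w y"
        using that wout[of y] by (cases "y \<le> x") auto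
    qed
    finally show ?thesis using w1 by simp
  qed
  have Rb: "R \<in> borel_measurable borel"
    using Rcont by (intro borel_measurable_continuous_onI continuous_at_imp_continuous_on) auto
  have Rm[measurable]: "R \<in> borel_measurable M"
    using Rb by (subst measurable_cong_sets[OF setsM refl])
  have dist: "distributed M lborel R (\<lambda>x. indicator {0..1} x / measure lborel {0..1::real})"
  proof (rule uniform_distrI_borel_atLeastAtMost[OF Rm])
    fix t :: real assume t: "0 \<le> t" "t \<le> 1"
    show "prob {x \<in> space M. R x \<le> t} = (t - 0) / (1 - 0)"
    proof (cases "t = 1")
      case True
      have "{x \<in> space M. R x \<le> t} = space M"
        using True by (auto simp: R_def cdf_bounded_prob)
      then show ?thesis using True prob_space by simp
    next
      case False
      with t have t1: "t < 1" by simp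
      define S where "S = {x. R x \<le> t}"
      define s where "s = Sup S"
      have ne: "-1 \<in> S" unfolding S_def using Rneg[of "-1"] t by simp
      have bd: "x \<le> 1" if "x \<in> S" for x
        using that Rbig[of x] t1 unfolding S_def by (cases "1 \<le> x") auto
      have bdd: "bdd_above S" using bd by (intro bdd_aboveI[where M=1]) auto
      have up: "x \<le> s" if "x \<in> S" for x unfolding s_def by (rule cSup_upper[OF that bdd])
      have Rs1: "R s \<le> t"
      proof (rule ccontr)
        assume "\<not> R s \<le> t"
        hence "t < R s" by simp
        from order_tendstoD(1)[OF Rcont[of s, unfolded isCont_def] this]
        obtain d where d: "d > 0" "\<And>y. y \<noteq> s \<Longrightarrow> dist y s < d \<Longrightarrow> t < R y"
          unfolding eventually_at by auto
        have "x \<le> s - d" if "x \<in> S" for x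
        proof (rule ccontr)
          assume "\<not> x \<le> s - d"
          moreover have "x \<le> s" using up that .
          ultimately have "x = s \<or> (x \<noteq> s \<and> dist x s < d)" by (auto simp: dist_real_def)
          then have "t < R x" using d \<open>t < R s\<close> by auto
          then show False using that unfolding S_def by simp
        qed
        then have "s \<le> s - d" unfolding s_def using ne by (intro cSup_least) auto
        then show False using d by simp
      qed
      have Rs2: "t \<le> R s"
      proof (rule ccontr)
        assume "\<not> t \<le> R s"
        hence "R s < t" by simp
        from order_tendstoD(2)[OF Rcont[of s, unfolded isCont_def] this]
        obtain d where d: "d > 0" "\<And>y. y \<noteq> s \<Longrightarrow> dist y s < d \<Longrightarrow> R y < t"
          unfolding eventually_at by auto
        have "R (s + d/2) < t" using d(1) by (intro d(2)) (auto simp: dist_real_def)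
        then have "s + d/2 \<in> S" unfolding S_def by simp
        then show False using up[of "s + d/2"] d(1) by simp
      qed
      have "{x \<in> space M. R x \<le> t} = {..s}"
      proof (intro set_eqI iffI)
        fix x assume "x \<in> {x \<in> space M. R x \<le> t}"
        then show "x \<in> {..s}" using up unfolding S_def by auto
      next
        fix x assume "x \<in> {..s}"
        then have "R x \<le> R s" using Rmono by auto
        then show "x \<in> {x \<in> space M. R x \<le> t}" using Rs1 by auto
      qed
      then have "prob {x \<in> space M. R x \<le> t} = R s" unfolding R_def cdf_def by simp
      then show ?thesis using Rs1 Rs2 by simp
    qed
  qed simp
  have "(\<integral>u. indicator {0..1} u / measure lborel {0..1::real} * g u \<partial>lborel) = (\<integral>x. g (R x) \<partial>M)"
    by (rule distributed_integral[OF dist]) (auto intro: borel_measurable_continuous_onI g)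
  also have "\<dots> = (\<integral>x. w x *\<^sub>R g (R x) \<partial>lborel)"
  proof -
    have Rc: "continuous_on UNIV R" using Rcont by (intro continuous_at_imp_continuous_on) auto
    have "continuous_on UNIV (\<lambda>x. g (R x))" by (rule continuous_on_compose2[OF g Rc]) auto
    then have "(\<lambda>x. g (R x)) \<in> borel_measurable borel" by (rule borel_measurable_continuous_onI)
    then have "(\<lambda>x. g (R x)) \<in> borel_measurable lborel" by simp
    then show ?thesis unfolding M_def
      by (intro integral_density) (auto simp: w0)
  qed
  finally show ?thesis by (simp add: R_def)
qed

lemma dens_props:
  fixes w :: "real \<Rightarrow> real"
  assumes wm[measurable]: "w \<in> borel_measurable borel" and w0: "\<And>x. 0 \<le> w x"
    and wi: "integrable lborel w" and w1: "integral\<^sup>L lborel w = 1"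
  defines "M \<equiv> density lborel (\<lambda>x. ennreal (w x))"
  shows dens_measure: "\<And>A. A \<in> sets borel \<Longrightarrow> measure M A = (\<integral>x. w x * indicator A x \<partial>lborel)"
    and dens_cdf_bounds: "\<And>x. 0 \<le> cdf M x \<and> cdf M x \<le> 1"
    and dens_cdf_meas: "cdf M \<in> borel_measurable borel"
proof -
  have spM[simp]: "space M = UNIV" and setsM[simp]: "sets M = sets borel" unfolding M_def by auto
  have emA: "emeasure M A = ennreal (\<integral>x. w x * indicator A x \<partial>lborel)" if A[measurable]: "A \<in> sets borel" for A
  proof -
    have "emeasure M A = (\<integral>\<^sup>+ x. ennreal (w x) * indicator A x \<partial>lborel)"
      unfolding M_def by (rule emeasure_density) auto
    also have "\<dots> = (\<integral>\<^sup>+ x. ennreal (w x * indicator A x) \<partial>lborel)"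
      by (intro nn_integral_cong) (auto split: split_indicator)
    also have "\<dots> = ennreal (\<integral>x. w x * indicator A x \<partial>lborel)"
      by (intro nn_integral_eq_integral integrable_real_mult_indicator wi) (auto simp: w0)
    finally show ?thesis .
  qed
  show mA: "measure M A = (\<integral>x. w x * indicator A x \<partial>lborel)" if A[measurable]: "A \<in> sets borel" for A
    using emA[OF A] by (simp add: measure_def integral_nonneg_AE w0)
  have "prob_space M"
    by (rule prob_spaceI) (use emA[of UNIV] w1 in simp)
  then interpret real_distribution M
    by (intro real_distribution.intro real_distribution_axioms.intro) auto
  show "0 \<le> cdf M x \<and> cdf M x \<le> 1" for x using cdf_nonneg cdf_bounded_prob by auto
  have Rcont: "isCont (cdf M) x" for x
  proof -
    have "emeasure M {x} = (\<integral>\<^sup>+ y. ennreal (w y) * indicator {x} y \<partial>lborel)"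
      unfolding M_def by (rule emeasure_density) auto
    also have "\<dots> = 0" by (rule nn_integral_null_set) auto
    finally show ?thesis unfolding isCont_cdf by (simp add: measure_def)
  qed
  show "cdf M \<in> borel_measurable borel"
    using Rcont by (intro borel_measurable_continuous_onI continuous_at_imp_continuous_on) auto
qed

lemma two_ab: "2 * \<bar>a * b\<bar> \<le> a\<^sup>2 + b\<^sup>2" for a b :: real
proof -
  have "0 \<le> (\<bar>a\<bar> - \<bar>b\<bar>)\<^sup>2" by simp
  then show ?thesis by (simp add: power2_diff abs_mult)
qed

lemma LBab: "a \<le> b \<Longrightarrow> (LBINT x=ereal a..ereal b. \<phi> x) = (\<integral>x. indicator {a..b} x * \<phi> x \<partial>lborel)"
  for \<phi> :: "real \<Rightarrow> real"
  by (simp add: interval_integral_Icc set_lebesgue_integral_def)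

lemma LB01: "(LBINT x=0..1. \<phi> x) = (\<integral>x. indicator {0..1} x * \<phi> x \<partial>lborel)"
  for \<phi> :: "real \<Rightarrow> real"
  using LBab[of 0 1 \<phi>] by (simp add: zero_ereal_def one_ereal_def)

theorem proposition4:
  fixes \<mu> :: real and \<rho> \<sigma> :: "real \<Rightarrow> real"
  assumes "\<rho> \<in> borel_measurable lborel" and "\<sigma> \<in> borel_measurable lborel"
    and "set_integrable lborel {0..1} (\<lambda>x. (\<rho> x)\<^sup>2)"
    and "set_integrable lborel {0..1} (\<lambda>x. (\<sigma> x)\<^sup>2)"
    and "(LBINT x=0..1. (\<rho> x)\<^sup>2) = 1"
    and "(LBINT x=0..1. \<rho> x * \<sigma> x) = 0"
  shows "(LBINT x=0..1. (\<sigma> x)\<^sup>2) + (LBINT x=0..1. \<rho> x * f \<mu> \<rho> \<sigma> x) = 0"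
proof -
  define I where "I = {0..1::real}"
  have [measurable]: "\<rho> \<in> borel_measurable borel" "\<sigma> \<in> borel_measurable borel"
    using assms(1,2) by simp_all
  have [measurable]: "I \<in> sets borel" unfolding I_def by simp
  define w where "w x = indicator I x * (\<rho> x)\<^sup>2" for x
  define s2 where "s2 x = indicator I x * (\<sigma> x)\<^sup>2" for x
  define v where "v x = indicator I x * (2 * \<rho> x * \<sigma> x)" for x
  have [measurable]: "w \<in> borel_measurable borel" "s2 \<in> borel_measurable borel" "v \<in> borel_measurable borel"
    unfolding w_def s2_def v_def by measurable
  have wi: "integrable lborel w" using assms(3) unfolding set_integrable_def w_def I_def by simp
  have s2i: "integrable lborel s2" using assms(4) unfolding set_integrable_def s2_def I_def by simp
  have w0: "0 \<le> w x" for x unfolding w_def by simp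
  have s20: "0 \<le> s2 x" for x unfolding s2_def by simp
  have w1: "integral\<^sup>L lborel w = 1" using assms(5) unfolding LB01 w_def I_def .
  have vi: "integrable lborel v"
  proof (rule Bochner_Integration.integrable_bound[where f="\<lambda>x. w x + s2 x"])
    show "integrable lborel (\<lambda>x. w x + s2 x)" using wi s2i by simp
    show "v \<in> borel_measurable lborel" by simp
    show "AE x in lborel. norm (v x) \<le> norm (w x + s2 x)"
    proof (rule AE_I2)
      fix x
      have "\<bar>2 * \<rho> x * \<sigma> x\<bar> \<le> (\<rho> x)\<^sup>2 + (\<sigma> x)\<^sup>2" using two_ab[of "\<rho> x" "\<sigma> x"] by (simp add: abs_mult)
      then show "norm (v x) \<le> norm (w x + s2 x)"
        unfolding v_def w_def s2_def by (auto split: split_indicator)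
    qed
  qed
  define A where "A y = (\<integral>z. (if z \<le> y then v z else 0) \<partial>lborel)" for y
  define c where "c = \<mu> - (LBINT y=0..1. (LBINT z=0..y. 2 * \<rho> z * \<sigma> z) * (\<rho> y)\<^sup>2)"
  define Gt where "Gt y = A y + c" for y
  have [measurable]: "A \<in> borel_measurable borel" unfolding A_def by measurable
  have [measurable]: "Gt \<in> borel_measurable borel" unfolding Gt_def by measurable
  define B where "B = (\<integral>z. \<bar>v z\<bar> \<partial>lborel) + \<bar>c\<bar>"
  have Abd: "\<bar>A y\<bar> \<le> (\<integral>z. \<bar>v z\<bar> \<partial>lborel)" for y
  proof -
    have "\<bar>A y\<bar> \<le> (\<integral>z. norm (if z \<le> y then v z else 0) \<partial>lborel)"
      unfolding A_def using integral_norm_bound by (metis real_norm_def)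
    also have "\<dots> \<le> (\<integral>z. \<bar>v z\<bar> \<partial>lborel)"
      by (rule integral_mono') (use vi in auto)
    finally show ?thesis .
  qed
  have Gbd: "\<bar>Gt y\<bar> \<le> B" for y unfolding Gt_def B_def using Abd[of y] by simp
  have GG: "G \<mu> \<rho> \<sigma> y = Gt y" if y: "y \<in> I" for y
  proof -
    have "(LBINT z=0..y. 2 * \<rho> z * \<sigma> z) = (\<integral>z. indicator {0..y} z * (2 * \<rho> z * \<sigma> z) \<partial>lborel)"
      using LBab[of 0 y] y unfolding I_def by (simp add: zero_ereal_def)
    also have "\<dots> = A y" unfolding A_def
      by (intro Bochner_Integration.integral_cong refl) (use y in \<open>auto simp: v_def I_def split: split_indicator\<close>)
    finally show ?thesis unfolding G_def Gt_def c_def by simp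
  qed

  define M where "M = density lborel (\<lambda>x. ennreal (w x))"
  define R where "R = cdf M"
  have Rb[measurable]: "R \<in> borel_measurable borel"
    unfolding R_def M_def by (rule dens_cdf_meas[OF _ w0 wi w1]) simp
  have R01: "0 \<le> R x" "R x \<le> 1" for x
    unfolding R_def M_def using dens_cdf_bounds[OF _ w0 wi w1] by auto
  have Rint: "R x = (LBINT z=0..x. (\<rho> z)\<^sup>2)" if x: "x \<in> I" for x
  proof -
    have "R x = (\<integral>z. w z * indicator {..x} z \<partial>lborel)"
      unfolding R_def M_def cdf_def by (rule dens_measure[OF _ w0 wi w1]) auto
    also have "\<dots> = (\<integral>z. indicator {0..x} z * (\<rho> z)\<^sup>2 \<partial>lborel)"
      by (intro Bochner_Integration.integral_cong refl) (use x in \<open>auto simp: w_def I_def split: split_indicator\<close>)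
    also have "\<dots> = (LBINT z=0..x. (\<rho> z)\<^sup>2)"
      using LBab[of 0 x] x unfolding I_def by (simp add: zero_ereal_def)
    finally show ?thesis .
  qed
  have Rdiff: "(LBINT z=y..x. (\<rho> z)\<^sup>2) = R x - R y" if x: "x \<in> I" and y: "y \<in> I" for x y
  proof -
    have "(LBINT z=ereal 0..ereal y. (\<rho> z)\<^sup>2) + (LBINT z=ereal y..ereal x. (\<rho> z)\<^sup>2) = (LBINT z=ereal 0..ereal x. (\<rho> z)\<^sup>2)"
    proof (rule interval_integral_sum)
      have si: "set_integrable lborel S (\<lambda>z. (\<rho> z)\<^sup>2)" if "S \<subseteq> {0..1}" "S \<in> sets lborel" for S
        by (rule set_integrable_subset[OF assms(3)]) (use that in auto)
      show "interval_lebesgue_integrable lborel (min (ereal 0) (min (ereal y) (ereal x)))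
        (max (ereal 0) (max (ereal y) (ereal x))) (\<lambda>z. (\<rho> z)\<^sup>2)"
        using x y unfolding I_def interval_lebesgue_integrable_def
        by (auto simp: min_def max_def einterval_iff intro!: si)
    qed
    then show ?thesis using Rint[OF x] Rint[OF y] by (simp add: zero_ereal_def)
  qed

  define Ck where "Ck = cosh (1/2) / (2 * sinh (1/2::real))"
  define k where "k u v = cosh (\<bar>u - v\<bar> - 1/2) / (2 * sinh (1/2::real))" for u v
  have sh: "0 < sinh (1/2::real)" by simp
  have kb: "0 \<le> k (R x) (R y) \<and> k (R x) (R y) \<le> Ck" for x y
  proof -
    define t where "t = \<bar>R x - R y\<bar> - 1/2"
    have "\<bar>t\<bar> \<le> 1/2" unfolding t_def using R01[of x] R01[of y] by (simp add: abs_if split: if_splits)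
    then have "cosh \<bar>t\<bar> \<le> cosh (1/2)" by (subst cosh_real_nonneg_le_iff) auto
    then have "cosh t \<le> cosh (1/2)" by simp
    moreover have "0 < cosh t" by simp
    ultimately have "cosh t / (2 * sinh (1/2)) \<le> cosh (1/2) / (2 * sinh (1/2))"
      "0 \<le> cosh t / (2 * sinh (1/2))"
      using sh by (auto intro!: divide_right_mono)
    then show ?thesis unfolding k_def Ck_def t_def by simp
  qed
  have Ck0: "0 \<le> Ck" using kb[of 0 0] by simp
  have wGi: "integrable lborel (\<lambda>y. w y * (Gt y)\<^sup>2)"
  proof (rule Bochner_Integration.integrable_bound[where f="\<lambda>y. w y * B\<^sup>2"])
    show "integrable lborel (\<lambda>y. w y * B\<^sup>2)" using wi by simp
    show "(\<lambda>y. w y * (Gt y)\<^sup>2) \<in> borel_measurable lborel" by simp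
    show "AE x in lborel. norm (w x * (Gt x)\<^sup>2) \<le> norm (w x * B\<^sup>2)"
    proof (rule AE_I2)
      fix x
      have "(Gt x)\<^sup>2 \<le> B\<^sup>2" using Gbd[of x] by (metis abs_ge_zero power2_abs power_mono)
      then have "w x * (Gt x)\<^sup>2 \<le> w x * B\<^sup>2" using w0[of x] by (rule mult_left_mono)
      then show "norm (w x * (Gt x)\<^sup>2) \<le> norm (w x * B\<^sup>2)"
        using w0[of x] by simp
    qed
  qed
  define h where "h y = w y * (Gt y)\<^sup>2 + 2 * s2 y" for y
  have hi: "integrable lborel h" unfolding h_def using wGi s2i by simp
  have h0: "0 \<le> h y" for y unfolding h_def using w0[of y] s20[of y] by simp
  have [measurable]: "h \<in> borel_measurable borel" unfolding h_def by measurable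
  define Fn where "Fn x = (\<integral>y. k (R x) (R y) * h y \<partial>lborel)" for x
  have [measurable]: "cosh \<in> borel_measurable (borel :: real measure)"
    by (intro borel_measurable_continuous_onI continuous_intros)
  have [measurable]: "h \<in> borel_measurable lborel" "R \<in> borel_measurable lborel" "w \<in> borel_measurable lborel"
    by simp_all
  have [measurable]: "Fn \<in> borel_measurable lborel" unfolding Fn_def k_def by measurable
  have FF: "F \<mu> \<rho> \<sigma> x = Fn x" if x: "x \<in> I" for x
  proof -
    have "F \<mu> \<rho> \<sigma> x = (\<integral>y. indicator {0..1} y * (cosh (\<bar>LBINT z=y..x. (\<rho> z)\<^sup>2\<bar> - 1/2) / (2 * sinh (1/2))
        * ((\<rho> y)\<^sup>2 * (G \<mu> \<rho> \<sigma> y)\<^sup>2 + 2 * (\<sigma> y)\<^sup>2)) \<partial>lborel)"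
      unfolding F_def by (rule LB01)
    also have "\<dots> = Fn x" unfolding Fn_def
    proof (intro Bochner_Integration.integral_cong refl)
      fix y
      show "indicator {0..1} y * (cosh (\<bar>LBINT z=y..x. (\<rho> z)\<^sup>2\<bar> - 1/2) / (2 * sinh (1/2))
        * ((\<rho> y)\<^sup>2 * (G \<mu> \<rho> \<sigma> y)\<^sup>2 + 2 * (\<sigma> y)\<^sup>2)) = k (R x) (R y) * h y"
      proof (cases "y \<in> I")
        case True
        then show ?thesis using Rdiff[OF x True] GG[OF True]
          by (simp add: k_def h_def w_def s2_def I_def)
      next
        case False
        then show ?thesis by (simp add: h_def w_def s2_def I_def)
      qed
    qed
    finally show ?thesis .
  qed
  have key: "(\<integral>x. w x * k (R x) a \<partial>lborel) = 1" if a: "0 \<le> a" "a \<le> 1" for a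
  proof -
    have wout: "w x = 0" if "x \<notin> {0..1}" for x using that by (simp add: w_def I_def)
    have gc: "continuous_on UNIV (\<lambda>u. k u a)" unfolding k_def by (intro continuous_intros) simp
    have "(\<integral>x. w x * k (R x) a \<partial>lborel) = (\<integral>u. indicator {0..1} u * k u a \<partial>lborel)"
      unfolding R_def M_def by (rule push[OF _ w0 wout wi w1 gc]) simp
    also have "\<dots> = (\<integral>u. indicator {0..1} u * cosh (\<bar>u - a\<bar> - 1/2) \<partial>lborel) / (2 * sinh (1/2))"
      unfolding k_def by (subst integral_divide_zero[symmetric]) (simp add: field_simps)
    also have "\<dots> = 1" using cosh_int[OF a] sh unfolding LB01 by simp
    finally show ?thesis .
  qed

  define P where "P x y = w x * (k (R x) (R y) * h y)" for x y
  have [measurable]: "(\<lambda>(x, y). P x y) \<in> borel_measurable (lborel \<Otimes>\<^sub>M lborel)"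
    unfolding P_def k_def by measurable
  have Qi: "integrable (lborel \<Otimes>\<^sub>M lborel) (\<lambda>(x, y). Ck * w x * h y)"
  proof (rule lborel_pair.Fubini_integrable)
    show "(\<lambda>(x, y). Ck * w x * h y) \<in> borel_measurable (lborel \<Otimes>\<^sub>M lborel)" by measurable
    have "(\<lambda>x. \<integral>y. norm (case (x, y) of (x, y) \<Rightarrow> Ck * w x * h y) \<partial>lborel) = (\<lambda>x. w x * (Ck * (\<integral>y. h y \<partial>lborel)))"
    proof
      fix x
      have "(\<integral>y. norm (case (x, y) of (x, y) \<Rightarrow> Ck * w x * h y) \<partial>lborel) = (\<integral>y. (Ck * w x) * h y \<partial>lborel)"
        using Ck0 w0[of x] h0 by (intro Bochner_Integration.integral_cong refl) (simp add: abs_mult)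
      also have "\<dots> = w x * (Ck * (\<integral>y. h y \<partial>lborel))" by simp
      finally show "(\<integral>y. norm (case (x, y) of (x, y) \<Rightarrow> Ck * w x * h y) \<partial>lborel) = w x * (Ck * (\<integral>y. h y \<partial>lborel))" .
    qed
    then show "integrable lborel (\<lambda>x. \<integral>y. norm (case (x, y) of (x, y) \<Rightarrow> Ck * w x * h y) \<partial>lborel)"
      using wi by simp
    show "AE x in lborel. integrable lborel (\<lambda>y. case (x, y) of (x, y) \<Rightarrow> Ck * w x * h y)"
      using hi by simp
  qed
  have Pi: "integrable (lborel \<Otimes>\<^sub>M lborel) (\<lambda>(x, y). P x y)"
  proof (rule Bochner_Integration.integrable_bound[OF Qi])
    show "(\<lambda>(x, y). P x y) \<in> borel_measurable (lborel \<Otimes>\<^sub>M lborel)" by measurable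
    show "AE p in lborel \<Otimes>\<^sub>M lborel. norm (case p of (x, y) \<Rightarrow> P x y) \<le> norm (case p of (x, y) \<Rightarrow> Ck * w x * h y)"
    proof (rule AE_I2, clarify)
      fix x y
      have "k (R x) (R y) * (w x * h y) \<le> Ck * (w x * h y)"
        using kb[of x y] w0[of x] h0[of y] by (intro mult_right_mono) auto
      moreover have "0 \<le> k (R x) (R y) * (w x * h y)" using kb[of x y] w0[of x] h0[of y] by simp
      ultimately show "norm (P x y) \<le> norm (Ck * w x * h y)"
        unfolding P_def by (simp add: mult_ac)
    qed
  qed
  have FnInt: "(\<integral>x. w x * Fn x \<partial>lborel) = (\<integral>y. h y \<partial>lborel)"
  proof -
    have "(\<integral>x. w x * Fn x \<partial>lborel) = (\<integral>x. (\<integral>y. P x y \<partial>lborel) \<partial>lborel)"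
      unfolding Fn_def P_def by simp
    also have "\<dots> = (\<integral>y. (\<integral>x. P x y \<partial>lborel) \<partial>lborel)"
      using lborel_pair.Fubini_integral[OF Pi] by simp
    also have "\<dots> = (\<integral>y. h y * (\<integral>x. w x * k (R x) (R y) \<partial>lborel) \<partial>lborel)"
      unfolding P_def by (intro Bochner_Integration.integral_cong refl) (simp flip: integral_mult_right_zero add: mult_ac)
    also have "\<dots> = (\<integral>y. h y \<partial>lborel)"
      using key R01 by simp
    finally show ?thesis .
  qed
  have Fnb: "\<bar>Fn x\<bar> \<le> Ck * (\<integral>y. h y \<partial>lborel)" for x
  proof -
    have "\<bar>Fn x\<bar> \<le> (\<integral>y. norm (k (R x) (R y) * h y) \<partial>lborel)"
      unfolding Fn_def using integral_norm_bound by (metis real_norm_def)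
    also have "\<dots> \<le> (\<integral>y. Ck * h y \<partial>lborel)"
    proof (rule integral_mono')
      show "integrable lborel (\<lambda>y. Ck * h y)" using hi by simp
      fix y
      show "norm (k (R x) (R y) * h y) \<le> Ck * h y"
        using kb[of x y] h0[of y] by (simp add: abs_mult mult_right_mono)
      show "0 \<le> Ck * h y" using Ck0 h0[of y] by simp
    qed
    finally show ?thesis by simp
  qed
  have wFi: "integrable lborel (\<lambda>x. w x * Fn x)"
  proof (rule Bochner_Integration.integrable_bound[where f="\<lambda>x. w x * (Ck * (\<integral>y. h y \<partial>lborel))"])
    show "integrable lborel (\<lambda>x. w x * (Ck * (\<integral>y. h y \<partial>lborel)))" using wi by simp
    show "(\<lambda>x. w x * Fn x) \<in> borel_measurable lborel" by measurable
    show "AE x in lborel. norm (w x * Fn x) \<le> norm (w x * (Ck * (\<integral>y. h y \<partial>lborel)))"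
    proof (rule AE_I2)
      fix x
      have "w x * \<bar>Fn x\<bar> \<le> w x * (Ck * (\<integral>y. h y \<partial>lborel))"
        using Fnb[of x] w0[of x] by (rule mult_left_mono)
      then show "norm (w x * Fn x) \<le> norm (w x * (Ck * (\<integral>y. h y \<partial>lborel)))"
        using w0[of x] Ck0 integral_nonneg_AE[of h lborel] h0 by (simp add: abs_mult)
    qed
  qed
  have L1: "(LBINT x=0..1. (\<sigma> x)\<^sup>2) = (\<integral>x. s2 x \<partial>lborel)"
    unfolding LB01 s2_def I_def ..
  have L2: "(LBINT x=0..1. \<rho> x * f \<mu> \<rho> \<sigma> x) = (\<integral>x. 1/2 * (w x * (Gt x)\<^sup>2) - 1/2 * (w x * Fn x) \<partial>lborel)"
    unfolding LB01
  proof (intro Bochner_Integration.integral_cong refl)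
    fix x
    show "indicator {0..1} x * (\<rho> x * f \<mu> \<rho> \<sigma> x) = 1/2 * (w x * (Gt x)\<^sup>2) - 1/2 * (w x * Fn x)"
    proof (cases "x \<in> I")
      case True
      then show ?thesis using GG[OF True] FF[OF True]
        by (simp add: f_def w_def I_def power2_eq_square algebra_simps)
    next
      case False
      then show ?thesis by (simp add: w_def I_def)
    qed
  qed
  have "(\<integral>x. 1/2 * (w x * (Gt x)\<^sup>2) - 1/2 * (w x * Fn x) \<partial>lborel)
      = 1/2 * (\<integral>x. w x * (Gt x)\<^sup>2 \<partial>lborel) - 1/2 * (\<integral>x. w x * Fn x \<partial>lborel)"
    using wGi wFi by simp
  moreover have "(\<integral>y. h y \<partial>lborel) = (\<integral>x. w x * (Gt x)\<^sup>2 \<partial>lborel) + 2 * (\<integral>x. s2 x \<partial>lborel)"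
    unfolding h_def using wGi s2i by simp
  ultimately show ?thesis unfolding L1 L2 FnInt by (simp add: field_simps)
qed

end
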